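(* Let $A\subset\mathcal{N}=\omega^\omega$, let $\mathcal{F}=\mathcal{F}_A$ be the family of all closed and discrete subsets of $A$, let $\{T_a : a\in A\}$ be an $(A,\mathcal{F})$-Reznichenko family of trees and $\mathcal{T}=\bigcup_{a\in A}T_a$. Let $\{U_n\}_{n<\omega}$ be a disjoint family of open subsets of $A$ whose union is closed in $A$, and let $\mathcal{T}=\bigcup_{n<\omega}D_n$. Then there exists $n<\omega$ such that $D_n\cap T_a$ is successively dense in the tree $T_a$ for every $a\in U_n$.
   Context: A tree is a partially ordered set $(T,\leq)$ in which for each $t$ the set $\{s: s<t\}$ is well ordered and which has a minimum, the root. An immediate successor of $t$ is a node $s>t$ with no $r$ satisfying $t<r<s$. The height is the least ordinal $\alpha$ such that no node has predecessor set of order type $\alpha$. A segment is a set $S\subset T$ of pairwise comparable elements such that $t\leq r\leq s$ with $t,s\in S$ implies $r\in S$; it is initial if it contains the root. For a set $A$ with $|A|\leq\mathfrak{c}$ and a hereditary family $\mathcal{F}$ of subsets of $A$, an $(A,\mathcal{F})$-Reznichenko family of trees is a family $\{T_a:a\in A\}$ of trees such that: (1) each $T_a$ has height $\omega$ and every node has $\mathfrak{c}$ many immediate successors; (2) $T_a\cap A=\{a\}$ and $a$ is the root of $T_a$; (3) for every $t\in\bigcup_a T_a$, $\{a\in A: t\in T_a\}\in\mathcal{F}$; (4) for $a\neq b$ and segments $S\subset T_a$, $S'\subset T_b$, $|S\cap S'|\leq 1$; (5) for every $B\in\mathcal{F}$ and every disjoint family $\{S_b:b\in B\}$ with $S_b$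 a finite initial segment of $T_b$, there are $\mathfrak{c}$ many $t$ that are simultaneously an immediate successor of $S_b$ in $T_b$ for all $b\in B$. A subset $D$ of a tree $T$ is successively dense if there is a countable family $R$ of immediate successors of the root such that every $t\in T$ incomparable with every element of $R$ has an immediate successor in $D$. *)

theory Defs
  imports "HOL-Analysis.Analysis" "HOL-Library.Equipollence"
begin

definition tlt :: "('n \<Rightarrow> 'n \<Rightarrow> bool) \<Rightarrow> 'n \<Rightarrow> 'n \<Rightarrow> bool" where
  "tlt le x y \<longleftrightarrow> le x y \<and> x \<noteq> y"

definition tpred :: "'n set \<Rightarrow> ('n \<Rightarrow> 'n \<Rightarrow> bool) \<Rightarrow> 'n \<Rightarrow> 'n set" where
  "tpred T le t = {s \<in> T. tlt le s t}"

definition is_tree :: "'n set \<Rightarrow> ('n \<Rightarrow> 'n \<Rightarrow> bool) \<Rightarrow> bool" where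
  "is_tree T le \<longleftrightarrow>
     (\<forall>x\<in>T. le x x) \<and>
     (\<forall>x\<in>T. \<forall>y\<in>T. le x y \<and> le y x \<longrightarrow> x = y) \<and>
     (\<forall>x\<in>T. \<forall>y\<in>T. \<forall>z\<in>T. le x y \<and> le y z \<longrightarrow> le x z) \<and>
     (\<forall>t\<in>T. (\<forall>x\<in>tpred T le t. \<forall>y\<in>tpred T le t. le x y \<or> le y x) \<and>
              (\<forall>X. X \<subseteq> tpred T le t \<and> X \<noteq> {} \<longrightarrow> (\<exists>m\<in>X. \<forall>x\<in>X. le m x))) \<and>
     (\<exists>r\<in>T. \<forall>t\<in>T. le r t)"

definition tree_root :: "'n set \<Rightarrow> ('n \<Rightarrow> 'n \<Rightarrow> bool) \<Rightarrow> 'n" where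
  "tree_root T le = (THE r. r \<in> T \<and> (\<forall>t\<in>T. le r t))"

text \<open>Height omega: every predecessor set is finite (order type some n < omega) and
  every finite order type n is realised by some node.\<close>
definition height_omega :: "'n set \<Rightarrow> ('n \<Rightarrow> 'n \<Rightarrow> bool) \<Rightarrow> bool" where
  "height_omega T le \<longleftrightarrow>
     (\<forall>t\<in>T. finite (tpred T le t)) \<and> (\<forall>n::nat. \<exists>t\<in>T. card (tpred T le t) = n)"

definition imm_succ :: "'n set \<Rightarrow> ('n \<Rightarrow> 'n \<Rightarrow> bool) \<Rightarrow> 'n \<Rightarrow> 'n \<Rightarrow> bool" where
  "imm_succ T le t s \<longleftrightarrow> s \<in> T \<and> tlt le t s \<and> \<not> (\<exists>r\<in>T. tlt le t r \<and> tlt le r s)"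

definition tsegment :: "'n set \<Rightarrow> ('n \<Rightarrow> 'n \<Rightarrow> bool) \<Rightarrow> 'n set \<Rightarrow> bool" where
  "tsegment T le S \<longleftrightarrow> S \<subseteq> T \<and> (\<forall>x\<in>S. \<forall>y\<in>S. le x y \<or> le y x) \<and>
     (\<forall>t\<in>S. \<forall>s\<in>S. \<forall>r\<in>T. le t r \<and> le r s \<longrightarrow> r \<in> S)"

definition initial_segment :: "'n set \<Rightarrow> ('n \<Rightarrow> 'n \<Rightarrow> bool) \<Rightarrow> 'n set \<Rightarrow> bool" where
  "initial_segment T le S \<longleftrightarrow> tsegment T le S \<and> tree_root T le \<in> S"

text \<open>t is an immediate successor of the (finite, nonempty) segment S: an immediate
  successor of the largest element of S.\<close>
definition imm_succ_seg :: "'n set \<Rightarrow> ('n \<Rightarrow> 'n \<Rightarrow> bool) \<Rightarrow> 'n set \<Rightarrow> 'n \<Rightarrow> bool" where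
  "imm_succ_seg T le S t \<longleftrightarrow> (\<exists>m\<in>S. (\<forall>s\<in>S. le s m) \<and> imm_succ T le m t)"

definition successively_dense :: "'n set \<Rightarrow> ('n \<Rightarrow> 'n \<Rightarrow> bool) \<Rightarrow> 'n set \<Rightarrow> bool" where
  "successively_dense T le D \<longleftrightarrow> D \<subseteq> T \<and>
     (\<exists>R. countable R \<and> (\<forall>r\<in>R. imm_succ T le (tree_root T le) r) \<and>
        (\<forall>t\<in>T. (\<forall>r\<in>R. \<not> le t r \<and> \<not> le r t) \<longrightarrow> (\<exists>s\<in>D. imm_succ T le t s)))"

text \<open>(A,F)-Reznichenko family. The points of A are embedded among the nodes via e.\<close>
definition reznichenko_family ::
  "'a set \<Rightarrow> 'a set set \<Rightarrow> ('a \<Rightarrow> 'n) \<Rightarrow> ('a \<Rightarrow> 'n set) \<Rightarrow> ('a \<Rightarrow> 'n \<Rightarrow> 'n \<Rightarrow> bool) \<Rightarrow> bool" where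
  "reznichenko_family A F e T le \<longleftrightarrow>
     A \<lesssim> (UNIV :: real set) \<and>
     (\<forall>a\<in>A. is_tree (T a) (le a) \<and> height_omega (T a) (le a) \<and>
        (\<forall>t\<in>T a. {s. imm_succ (T a) (le a) t s} \<approx> (UNIV :: real set))) \<and>
     (\<forall>a\<in>A. T a \<inter> e ` A = {e a} \<and> e a \<in> T a \<and> (\<forall>t\<in>T a. le a (e a) t)) \<and>
     (\<forall>t\<in>(\<Union>a\<in>A. T a). {a\<in>A. t \<in> T a} \<in> F) \<and>
     (\<forall>a\<in>A. \<forall>b\<in>A. \<forall>S S'. a \<noteq> b \<and> tsegment (T a) (le a) S \<and> tsegment (T b) (le b) S'
         \<longrightarrow> (\<forall>x\<in>S \<inter> S'. \<forall>y\<in>S \<inter> S'. x = y)) \<and>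
     (\<forall>B\<in>F. \<forall>Sg. (\<forall>b\<in>B. finite (Sg b) \<and> initial_segment (T b) (le b) (Sg b)) \<and>
         (\<forall>b\<in>B. \<forall>b'\<in>B. b \<noteq> b' \<longrightarrow> Sg b \<inter> Sg b' = {})
       \<longrightarrow> {t \<in> (\<Union>a\<in>A. T a). \<forall>b\<in>B. imm_succ_seg (T b) (le b) (Sg b) t} \<approx> (UNIV :: real set))"

definition closed_discrete_subsets :: "('a::topological_space) set \<Rightarrow> 'a set set" where
  "closed_discrete_subsets A =
     {D. D \<subseteq> A \<and> closedin (top_of_set A) D \<and> (\<forall>x\<in>D. \<exists>U. open U \<and> U \<inter> D = {x})}"

end

theory Submission
  imports Defs
begin
lemma is_tree_refl: "is_tree T le \<Longrightarrow> \<forall>x\<in>T. le x x"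
  unfolding is_tree_def by (elim conjE) assumption
lemma is_tree_anti: "is_tree T le \<Longrightarrow> \<forall>x\<in>T. \<forall>y\<in>T. le x y \<and> le y x \<longrightarrow> x = y"
  unfolding is_tree_def by (elim conjE) assumption
lemma is_tree_trans: "is_tree T le \<Longrightarrow> \<forall>x\<in>T. \<forall>y\<in>T. \<forall>z\<in>T. le x y \<and> le y z \<longrightarrow> le x z"
  unfolding is_tree_def by (elim conjE) assumption
lemma is_tree_wo: "is_tree T le \<Longrightarrow> \<forall>t\<in>T. (\<forall>x\<in>tpred T le t. \<forall>y\<in>tpred T le t. le x y \<or> le y x) \<and>
              (\<forall>X. X \<subseteq> tpred T le t \<and> X \<noteq> {} \<longrightarrow> (\<exists>m\<in>X. \<forall>x\<in>X. le m x))"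
  unfolding is_tree_def by (elim conjE) assumption

lemma tree_root_eq:
  assumes "is_tree T le" "r \<in> T" "\<forall>t\<in>T. le r t"
  shows "tree_root T le = r"
  unfolding tree_root_def
proof (rule the_equality)
  show "r \<in> T \<and> (\<forall>t\<in>T. le r t)" using assms by auto
  fix x assume "x \<in> T \<and> (\<forall>t\<in>T. le x t)"
  then show "x = r" using assms is_tree_anti[OF assms(1)] by metis
qed

lemma level1:
  assumes tr: "is_tree T le" and r: "r \<in> T" "\<forall>t\<in>T. le r t" and x: "x \<in> T" "x \<noteq> r"
  shows "\<exists>m. imm_succ T le r m \<and> le m x"
proof -
  define Y where "Y = {y\<in>T. tlt le r y \<and> le y x}"
  note refl = is_tree_refl[OF tr] and anti = is_tree_anti[OF tr] and trans = is_tree_trans[OF tr]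
  have wo: "\<forall>X. X \<subseteq> tpred T le x \<and> X \<noteq> {} \<longrightarrow> (\<exists>m\<in>X. \<forall>z\<in>X. le m z)"
    using bspec[OF is_tree_wo[OF tr] x(1)] by (rule conjunct2)
  have "\<exists>m\<in>Y. \<forall>z\<in>Y. le m z"
  proof (cases "Y \<inter> tpred T le x = {}")
    case True
    have xY: "x \<in> Y" using x r refl unfolding Y_def tlt_def by auto
    have "\<forall>z\<in>Y. z = x" using True unfolding Y_def tpred_def tlt_def by auto
    then have "\<forall>z\<in>Y. le x z" using refl x by auto
    then show ?thesis using xY by blast
  next
    case False
    have "Y \<inter> tpred T le x \<subseteq> tpred T le x" by auto
    with False obtain m where m: "m \<in> Y \<inter> tpred T le x" "\<forall>z\<in>Y \<inter> tpred T le x. le m z"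
      using wo by meson
    have "\<forall>z\<in>Y. le m z"
    proof
      fix z assume z: "z \<in> Y"
      show "le m z"
      proof (cases "z = x")
        case True then show ?thesis using m unfolding tpred_def tlt_def by auto
      next
        case False
        then have "z \<in> Y \<inter> tpred T le x" using z unfolding Y_def tpred_def tlt_def by auto
        then show ?thesis using m(2) by blast
      qed
    qed
    then show ?thesis using m by auto
  qed
  then obtain m where m: "m \<in> Y" "\<forall>z\<in>Y. le m z" by blast
  have mT: "m \<in> T" and rm: "tlt le r m" and mx: "le m x" using m(1) unfolding Y_def by auto
  have "imm_succ T le r m"
    unfolding imm_succ_def
  proof (intro conjI)
    show "m \<in> T" "tlt le r m" using mT rm by auto
    show "\<not> (\<exists>q\<in>T. tlt le r q \<and> tlt le q m)"
    proof
      assume "\<exists>q\<in>T. tlt le r q \<and> tlt le q m"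
      then obtain q where q: "q \<in> T" "tlt le r q" "le q m" "q \<noteq> m" unfolding tlt_def by blast
      have "le q x" using trans[rule_format, OF q(1) mT x(1)] q(3) mx by blast
      then have "q \<in> Y" using q unfolding Y_def by auto
      then have "le m q" using m by auto
      then have "q = m" using anti[rule_format, OF q(1) mT] q(3) by blast
      then show False using q(4) by simp
    qed
  qed
  then show ?thesis using mx by auto
qed

lemma branch_props:
  assumes tr: "is_tree T le" and r: "r \<in> T" "\<forall>t\<in>T. le r t" and s: "s \<in> T"
    and fin: "finite (tpred T le s)"
  shows "finite {y\<in>T. le y s}" "initial_segment T le {y\<in>T. le y s}"
    "\<And>t. imm_succ_seg T le {y\<in>T. le y s} t \<Longrightarrow> imm_succ T le s t"
proof -
  note refl = is_tree_refl[OF tr] and anti = is_tree_anti[OF tr] and trans = is_tree_trans[OF tr]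
  have ch: "\<forall>x\<in>tpred T le s. \<forall>y\<in>tpred T le s. le x y \<or> le y x"
    using bspec[OF is_tree_wo[OF tr] s] by (rule conjunct1)
  have eq: "{y\<in>T. le y s} = insert s (tpred T le s)"
    using s refl unfolding tpred_def tlt_def by auto
  show "finite {y\<in>T. le y s}" using eq fin by simp
  have "tsegment T le {y\<in>T. le y s}"
    unfolding tsegment_def
  proof (intro conjI)
    show "{y \<in> T. le y s} \<subseteq> T" by auto
    show "\<forall>x\<in>{y \<in> T. le y s}. \<forall>y\<in>{y \<in> T. le y s}. le x y \<or> le y x"
    proof (intro ballI)
      fix x y assume xy: "x \<in> {y \<in> T. le y s}" "y \<in> {y \<in> T. le y s}"
      show "le x y \<or> le y x"
      proof (cases "x = s \<or> y = s")
        case True then show ?thesis using xy by auto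
      next
        case False
        then have "x \<in> tpred T le s" "y \<in> tpred T le s" using xy unfolding tpred_def tlt_def by auto
        then show ?thesis using ch by blast
      qed
    qed
    show "\<forall>t\<in>{y \<in> T. le y s}. \<forall>sa\<in>{y \<in> T. le y s}. \<forall>ra\<in>T. le t ra \<and> le ra sa \<longrightarrow> ra \<in> {y \<in> T. le y s}"
    proof (intro ballI impI)
      fix t sa ra assume "t \<in> {y \<in> T. le y s}" "sa \<in> {y \<in> T. le y s}" "ra \<in> T" "le t ra \<and> le ra sa"
      then show "ra \<in> {y \<in> T. le y s}" using trans[rule_format, of ra sa s] s by blast
    qed
  qed
  moreover have "tree_root T le = r" by (rule tree_root_eq[OF tr r])
  ultimately show "initial_segment T le {y\<in>T. le y s}"
    unfolding initial_segment_def using r s by auto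
  fix t assume "imm_succ_seg T le {y\<in>T. le y s} t"
  then obtain m where m: "m \<in> T" "le m s" "\<forall>z\<in>{y\<in>T. le y s}. le z m" "imm_succ T le m t"
    unfolding imm_succ_seg_def by blast
  have "le s m" using m(3) s refl by blast
  then have "m = s" using anti[rule_format, OF m(1) s] m(2) by blast
  then show "imm_succ T le s t" using m by simp
qed

lemma avoid:
  assumes tr: "is_tree T le" and r: "r \<in> T" "\<forall>t\<in>T. le r t"
    and nd: "\<not> successively_dense T le (D \<inter> T)"
    and F: "finite F" "r \<notin> F"
  shows "\<exists>s\<in>T. \<not> (\<exists>x\<in>D \<inter> T. imm_succ T le s x) \<and> (\<forall>y\<in>T. le y s \<longrightarrow> y \<notin> F)"
proof -
  have trans: "\<forall>x\<in>T. \<forall>y\<in>T. \<forall>z\<in>T. le x y \<and> le y z \<longrightarrow> le x z"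
    using is_tree_trans[OF tr] .
  have root: "tree_root T le = r" by (rule tree_root_eq[OF tr r])
  define ch where "ch x = (SOME m. imm_succ T le r m \<and> le m x)" for x
  have chp: "imm_succ T le r (ch x) \<and> le (ch x) x" if "x \<in> T" "x \<in> F" for x
  proof -
    have "x \<noteq> r" using that F by auto
    then have "\<exists>m. imm_succ T le r m \<and> le m x" using level1[OF tr r that(1)] by blast
    then show ?thesis unfolding ch_def by (rule someI_ex)
  qed
  define R where "R = ch ` (F \<inter> T)"
  have "countable R" unfolding R_def using F by (simp add: countable_finite)
  moreover have "\<forall>q\<in>R. imm_succ T le (tree_root T le) q" unfolding R_def root using chp by auto
  moreover have nd': "\<not> (\<exists>R. countable R \<and> (\<forall>r\<in>R. imm_succ T le (tree_root T le) r) \<and>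
        (\<forall>t\<in>T. (\<forall>r\<in>R. \<not> le t r \<and> \<not> le r t) \<longrightarrow> (\<exists>s\<in>D \<inter> T. imm_succ T le t s)))"
    using nd unfolding successively_dense_def by simp
  ultimately have "\<not> (\<forall>t\<in>T. (\<forall>r\<in>R. \<not> le t r \<and> \<not> le r t) \<longrightarrow> (\<exists>s\<in>D \<inter> T. imm_succ T le t s))"
    by (meson)
  then obtain t where t: "t \<in> T" "\<forall>q\<in>R. \<not> le t q \<and> \<not> le q t"
     "\<not> (\<exists>x\<in>D \<inter> T. imm_succ T le t x)"
    by blast
  have "\<forall>y\<in>T. le y t \<longrightarrow> y \<notin> F"
  proof (intro ballI impI notI)
    fix y assume y: "y \<in> T" "le y t" "y \<in> F"
    have "ch y \<in> R" unfolding R_def using y by auto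
    moreover have "le (ch y) t"
    proof -
      have "ch y \<in> T" "le (ch y) y" using chp[OF y(1) y(3)] unfolding imm_succ_def by auto
      then show ?thesis using trans y t(1) by blast
    qed
    ultimately show False using t by auto
  qed
  then show ?thesis using t(1) t(3) by blast
qed

lemma open_coord_ne: "open {f::nat\<Rightarrow>nat. f k \<noteq> c}"
proof -
  have "{f::nat\<Rightarrow>nat. f k \<noteq> c} = (\<lambda>f. f k) -` (- {c})" by auto
  moreover have "open ((\<lambda>f::nat\<Rightarrow>nat. f k) -` (- {c}))"
    by (rule open_vimage) (auto intro: continuous_on_product_coordinates)
  ultimately show ?thesis by simp
qed

lemma open_compl_sing_baire: "open (- {y::nat\<Rightarrow>nat})"
proof -
  have "- {y} = (\<Union>k. {f::nat\<Rightarrow>nat. f k \<noteq> y k})" by auto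
  moreover have "open (\<Union>k. {f::nat\<Rightarrow>nat. f k \<noteq> y k})" using open_coord_ne by auto
  ultimately show ?thesis by simp
qed

primrec Fseq :: "(nat \<Rightarrow> 'n set \<Rightarrow> 'n) \<Rightarrow> (nat \<Rightarrow> 'n \<Rightarrow> 'n set) \<Rightarrow> nat \<Rightarrow> 'n set" where
  "Fseq g br 0 = {}"
| "Fseq g br (Suc n) = Fseq g br n \<union> br n (g n (Fseq g br n))"

theorem lemma4p3:
  fixes A :: "(nat \<Rightarrow> nat) set"
    and T :: "(nat \<Rightarrow> nat) \<Rightarrow> ((nat \<Rightarrow> nat) + 'x) set"
    and le :: "(nat \<Rightarrow> nat) \<Rightarrow> ((nat \<Rightarrow> nat) + 'x) \<Rightarrow> ((nat \<Rightarrow> nat) + 'x) \<Rightarrow> bool"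
    and U :: "nat \<Rightarrow> (nat \<Rightarrow> nat) set"
    and D :: "nat \<Rightarrow> ((nat \<Rightarrow> nat) + 'x) set"
  assumes "reznichenko_family A (closed_discrete_subsets A) Inl T le"
    and "\<And>n. openin (top_of_set A) (U n)"
    and "disjoint_family U"
    and "closedin (top_of_set A) (\<Union>n. U n)"
    and "(\<Union>a\<in>A. T a) = (\<Union>n. D n)"
  shows "\<exists>n. \<forall>a\<in>U n. successively_dense (T a) (le a) (D n \<inter> T a)"
proof (rule ccontr)
  assume "\<not> ?thesis"
  then have "\<forall>n. \<exists>x. x \<in> U n \<and> \<not> successively_dense (T x) (le x) (D n \<inter> T x)" by blast
  then obtain a where a: "\<And>n. a n \<in> U n" "\<And>n. \<not> successively_dense (T (a n)) (le (a n)) (D n \<inter> T (a n))"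
    by metis
  have UA: "U n \<subseteq> A" for n using openin_imp_subset[OF assms(2)[of n]] by simp
  have aA: "a n \<in> A" for n using a(1) UA by blast
  have ainj: "n = m" if "a n = a m" for n m
  proof (rule ccontr)
    assume "n \<noteq> m"
    then have "U n \<inter> U m = {}" using assms(3) unfolding disjoint_family_on_def by blast
    then show False using a(1)[of n] a(1)[of m] that by auto
  qed
  have rf: "A \<lesssim> (UNIV :: real set) \<and>
     (\<forall>a\<in>A. is_tree (T a) (le a) \<and> height_omega (T a) (le a) \<and>
        (\<forall>t\<in>T a. {s. imm_succ (T a) (le a) t s} \<approx> (UNIV :: real set))) \<and>
     (\<forall>a\<in>A. T a \<inter> Inl ` A = {Inl a} \<and> Inl a \<in> T a \<and> (\<forall>t\<in>T a. le a (Inl a) t)) \<and>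
     (\<forall>t\<in>(\<Union>a\<in>A. T a). {a\<in>A. t \<in> T a} \<in> closed_discrete_subsets A) \<and>
     (\<forall>a\<in>A. \<forall>b\<in>A. \<forall>S S'. a \<noteq> b \<and> tsegment (T a) (le a) S \<and> tsegment (T b) (le b) S'
         \<longrightarrow> (\<forall>x\<in>S \<inter> S'. \<forall>y\<in>S \<inter> S'. x = y)) \<and>
     (\<forall>B\<in>closed_discrete_subsets A. \<forall>Sg. (\<forall>b\<in>B. finite (Sg b) \<and> initial_segment (T b) (le b) (Sg b)) \<and>
         (\<forall>b\<in>B. \<forall>b'\<in>B. b \<noteq> b' \<longrightarrow> Sg b \<inter> Sg b' = {})
       \<longrightarrow> {t \<in> (\<Union>a\<in>A. T a). \<forall>b\<in>B. imm_succ_seg (T b) (le b) (Sg b) t} \<approx> (UNIV :: real set))"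
    using assms(1) unfolding reznichenko_family_def .
  note rfT = rf[THEN conjunct2, THEN conjunct1]
  note rfE = rf[THEN conjunct2, THEN conjunct2, THEN conjunct1]
  note rf5 = rf[THEN conjunct2, THEN conjunct2, THEN conjunct2, THEN conjunct2, THEN conjunct2]
  have tree: "is_tree (T (a n)) (le (a n))" for n using rfT aA by blast
  have fin: "\<forall>t\<in>T (a n). finite (tpred (T (a n)) (le (a n)) t)" for n
    using rfT aA unfolding height_omega_def by blast
  have rootT: "Inl (a n) \<in> T (a n)" and rootle: "\<forall>t\<in>T (a n). le (a n) (Inl (a n)) t" for n
    using rfE aA by blast+
  have rootnot: "Inl (a n) \<notin> T (a k)" if "k \<noteq> n" for k n
  proof
    assume "Inl (a n) \<in> T (a k)"
    then have "Inl (a n) \<in> T (a k) \<inter> Inl ` A" using aA by blast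
    then have "Inl (a n) = (Inl (a k) :: (nat \<Rightarrow> nat) + 'x)" using rfE aA[of k] by blast
    then have "a n = a k" by simp
    then show False using ainj that by metis
  qed
  define P where "P n F s \<longleftrightarrow> s \<in> T (a n) \<and> \<not> (\<exists>x\<in>D n \<inter> T (a n). imm_succ (T (a n)) (le (a n)) s x)
      \<and> (\<forall>y\<in>T (a n). le (a n) y s \<longrightarrow> y \<notin> F)" for n F s
  have Pex: "\<exists>s. P n F s" if "finite F" "Inl (a n) \<notin> F" for n F
    using avoid[OF tree rootT rootle a(2) that] unfolding P_def by blast
  define g where "g n F = (SOME s. P n F s)" for n F
  define br where "br n s = {y\<in>T (a n). le (a n) y s}" for n s
  define Fs where "Fs = Fseq g br"
  have nF: "Inl (a n) \<notin> F" if sub: "F \<subseteq> (\<Union>k\<in>{..<n}. T (a k))" for n F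
  proof
    assume "Inl (a n) \<in> F"
    then obtain k where "k < n" "Inl (a n) \<in> T (a k)" using sub by blast
    then show False using rootnot[of k n] by simp
  qed
  have gP: "P n F (g n F)" if "finite F" "F \<subseteq> (\<Union>k\<in>{..<n}. T (a k))" for n F
  proof -
    have "\<exists>s. P n F s" using Pex[OF that(1) nF[OF that(2)]] .
    then show ?thesis unfolding g_def by (rule someI_ex)
  qed
  have inv: "finite (Fs n) \<and> Fs n \<subseteq> (\<Union>k\<in>{..<n}. T (a k))" for n
  proof (induction n)
    case 0 then show ?case unfolding Fs_def by simp
  next
    case (Suc n)
    have Pn: "P n (Fs n) (g n (Fs n))" using gP Suc by blast
    then have sT: "g n (Fs n) \<in> T (a n)" unfolding P_def by blast
    have "finite (br n (g n (Fs n)))" unfolding br_def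
      using branch_props(1)[OF tree rootT rootle sT bspec[OF fin sT]] .
    moreover have "br n (g n (Fs n)) \<subseteq> T (a n)" unfolding br_def by blast
    moreover have "Fs (Suc n) = Fs n \<union> br n (g n (Fs n))" unfolding Fs_def by simp
    moreover have "(\<Union>k\<in>{..<n}. T (a k)) \<union> T (a n) \<subseteq> (\<Union>k\<in>{..<Suc n}. T (a k))"
      using less_SucI by blast
    ultimately show ?case using Suc by auto
  qed
  define s where "s n = g n (Fs n)" for n
  have Ps: "P n (Fs n) (s n)" for n
    unfolding s_def using gP inv by blast
  have sT: "s n \<in> T (a n)" for n using Ps unfolding P_def by blast
  have FsSuc: "Fs (Suc n) = Fs n \<union> br n (s n)" for n unfolding Fs_def s_def by simp
  have mono: "Fs n \<subseteq> Fs m" if "n \<le> m" for n m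
  proof (rule lift_Suc_mono_le[of Fs, OF _ that])
    fix k show "Fs k \<subseteq> Fs (Suc k)" using FsSuc[of k] by (rule ssubst) (rule Un_upper1)
  qed
  have disj: "br n (s n) \<inter> br m (s m) = {}" if "n < m" for n m
  proof -
    have "br n (s n) \<subseteq> Fs (Suc n)" using FsSuc[of n] by simp
    also have "\<dots> \<subseteq> Fs m" using mono[of "Suc n" m] that by simp
    finally have 1: "br n (s n) \<subseteq> Fs m" .
    have 2: "\<forall>y\<in>br m (s m). y \<notin> Fs m" using Ps[of m] unfolding P_def br_def by blast
    show ?thesis using 1 2 by blast
  qed
  define B where "B = range a"
  have BA: "B \<subseteq> A" unfolding B_def using aA by blast
  have discr: "\<forall>x\<in>B. \<exists>V. open V \<and> V \<inter> B = {x}"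
  proof
    fix x assume "x \<in> B"
    then obtain n where n: "x = a n" unfolding B_def by blast
    obtain V where V: "open V" "U n = A \<inter> V" using assms(2)[of n] unfolding openin_open by blast
    have "V \<inter> B = {x}"
    proof
      show "V \<inter> B \<subseteq> {x}"
      proof
        fix y assume "y \<in> V \<inter> B"
        then obtain k where k: "y = a k" "a k \<in> V" unfolding B_def by blast
        then have "a k \<in> U n" using V aA by blast
        then have "k = n" using a(1)[of k] assms(3) unfolding disjoint_family_on_def by blast
        then show "y \<in> {x}" using k n by simp
      qed
      show "{x} \<subseteq> V \<inter> B" using n V a(1)[of n] \<open>x \<in> B\<close> by blast
    qed
    then show "\<exists>V. open V \<and> V \<inter> B = {x}" using V by blast
  qed
  have clo: "closedin (top_of_set A) B"
  proof -
    have eq: "A - B = (A - (\<Union>n. U n)) \<union> (\<Union>n. U n \<inter> (- {a n}))"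
    proof
      show "A - B \<subseteq> (A - (\<Union>n. U n)) \<union> (\<Union>n. U n \<inter> (- {a n}))" unfolding B_def by blast
      show "(A - (\<Union>n. U n)) \<union> (\<Union>n. U n \<inter> (- {a n})) \<subseteq> A - B"
      proof
        fix y assume y: "y \<in> (A - (\<Union>n. U n)) \<union> (\<Union>n. U n \<inter> (- {a n}))"
        show "y \<in> A - B"
        proof (cases "y \<in> A - (\<Union>n. U n)")
          case True then show ?thesis unfolding B_def using a(1) by blast
        next
          case False
          then obtain n where n: "y \<in> U n" "y \<noteq> a n" using y by blast
          have "y \<notin> B"
          proof
            assume "y \<in> B"
            then obtain k where k: "y = a k" unfolding B_def by blast
            then have "k = n" using a(1)[of k] n assms(3) unfolding disjoint_family_on_def by blast
            then show False using n k by simp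
          qed
          then show ?thesis using n UA by blast
        qed
      qed
    qed
    have o1: "openin (top_of_set A) (A - (\<Union>n. U n))"
      using assms(4) unfolding closedin_def by simp
    have o2: "openin (top_of_set A) (\<Union>n. U n \<inter> (- {a n}))"
      using openin_Int_open[OF assms(2) open_compl_sing_baire] by blast
    have "openin (top_of_set A) (A - B)" unfolding eq using o1 o2 by blast
    then show ?thesis unfolding closedin_def using BA by simp
  qed
  have BF: "B \<in> closed_discrete_subsets A"
    unfolding closed_discrete_subsets_def using BA clo discr by blast
  define Sg where "Sg b = br (inv a b) (s (inv a b))" for b
  have injA: "inj a" using ainj unfolding inj_def by blast
  have Sga: "Sg (a n) = br n (s n)" for n unfolding Sg_def using injA by simp
  have h1: "\<forall>b\<in>B. finite (Sg b) \<and> initial_segment (T b) (le b) (Sg b)"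
  proof
    fix b assume "b \<in> B"
    then obtain n where n: "b = a n" unfolding B_def by blast
    show "finite (Sg b) \<and> initial_segment (T b) (le b) (Sg b)"
      unfolding n Sga br_def
      using branch_props(1,2)[OF tree[of n] rootT[of n] rootle[of n] sT[of n] bspec[OF fin[of n] sT[of n]]] by blast
  qed
  have h2: "\<forall>b\<in>B. \<forall>b'\<in>B. b \<noteq> b' \<longrightarrow> Sg b \<inter> Sg b' = {}"
  proof (intro ballI impI)
    fix b b' assume "b \<in> B" "b' \<in> B" "b \<noteq> b'"
    then obtain n m where nm: "b = a n" "b' = a m" "n \<noteq> m" unfolding B_def by blast
    show "Sg b \<inter> Sg b' = {}"
    proof (cases "n < m")
      case True then show ?thesis unfolding nm Sga using disj by blast
    next
      case False then have "m < n" using nm by simp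
      then show ?thesis unfolding nm Sga using disj by blast
    qed
  qed
  have big: "{t \<in> (\<Union>a\<in>A. T a). \<forall>b\<in>B. imm_succ_seg (T b) (le b) (Sg b) t} \<approx> (UNIV :: real set)"
    using bspec[OF rf5 BF, THEN spec[where x=Sg]] h1 h2 by (rule mp[OF _ conjI])
  have "{t \<in> (\<Union>a\<in>A. T a). \<forall>b\<in>B. imm_succ_seg (T b) (le b) (Sg b) t} \<noteq> {}"
  proof
    assume e: "{t \<in> (\<Union>a\<in>A. T a). \<forall>b\<in>B. imm_succ_seg (T b) (le b) (Sg b) t} = {}"
    have "(UNIV :: real set) \<approx> ({} :: ((nat \<Rightarrow> nat) + 'x) set)" using eqpoll_sym[OF big] unfolding e .
    then show False using eqpoll_empty_iff_empty by auto
  qed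
  then obtain t where t: "t \<in> (\<Union>a\<in>A. T a)" "\<forall>b\<in>B. imm_succ_seg (T b) (le b) (Sg b) t" by blast
  then obtain m where m: "t \<in> D m" using assms(5) by blast
  have "imm_succ_seg (T (a m)) (le (a m)) (Sg (a m)) t" using t(2) unfolding B_def by blast
  then have "imm_succ_seg (T (a m)) (le (a m)) (br m (s m)) t" unfolding Sga .
  then have "imm_succ (T (a m)) (le (a m)) (s m) t"
    unfolding br_def by (rule branch_props(3)[OF tree[of m] rootT[of m] rootle[of m] sT[of m] bspec[OF fin[of m] sT[of m]]])
  moreover then have "t \<in> T (a m)" unfolding imm_succ_def by blast
  ultimately show False using Ps[of m] m unfolding P_def by blast
qed

end
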